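(* Let users belong to one of three disjoint sets $T_1,T_2,T_3$ with probabilities $\pi_1,\pi_2,\pi_3>0$ ($\pi_1+\pi_2+\pi_3=1$), let $T_{12}=T_1\cup T_2$, and let the publisher's data reveal whether a user is in $T_{12}$ or $T_3$. Fix a density $f$ of the highest competing bid (independent of the user) and observed average bids $b_{12}>b_3\ge0$ of the advertiser on users in $T_{12}$ and $T_3$ respectively. Let $b=(\pi_1+\pi_2)b_{12}+\pi_3b_3$ and $$V_{\max}=(\pi_1+\pi_2)\int_b^{b_{12}}(b_{12}-p)f(p)\,dp+\pi_3\int_{b_3}^{b}(p-b_3)f(p)\,dp.$$ Then for every $V\in[0,V_{\max}]$ there exist nonnegative values $v_1,v_2,v_3$ of the advertiser for users in $T_1,T_2,T_3$ and a private targeting signal of the advertiser (indicating whether the user lies in a subset $S_1\subseteq T_1$ consisting of a random fraction $\alpha\in[0,1]$ of $T_1$) such that, when the advertiser bids her expected value given her information, her average bids on $T_{12}$ and $T_3$ users are $b_{12}$ and $b_3$, and her value for the publisher's data is exactly $V$. In particular, the advertiser's value for the data cannot be inferred from her average bids and the competing bid distribution.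
   Context: Independent private values, second-price auction; the advertiser's value for a user in $T_i$ is $v_i$, and she bids her conditional expected value given all information available to her. Her value for the publisher's data is her expected utility with the publisher's data minus her expected utility without it (with her own private signal available in both cases). *)

theory Defs
  imports "HOL-Analysis.Analysis"
begin

text \<open>Users are modelled by finitely many atoms (i, s): i \<in> {1,2,3} is the type
  (user in T_i), s records whether the user lies in the advertiser's targeting set
  S_1 \<subseteq> T_1 (a random fraction alpha of T_1).\<close>

definition atoms :: "(nat \<times> bool) set" where
  "atoms = {(1, True), (1, False), (2, False), (3, False)}"

definition mass :: "real \<Rightarrow> real \<Rightarrow> real \<Rightarrow> real \<Rightarrow> nat \<times> bool \<Rightarrow> real" where
  "mass p1 p2 p3 \<alpha> u =
     (if fst u = 1 then (if snd u then \<alpha> * p1 else (1 - \<alpha>) * p1)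
      else if fst u = 2 then p2 else p3)"

definition val :: "real \<Rightarrow> real \<Rightarrow> real \<Rightarrow> nat \<times> bool \<Rightarrow> real" where
  "val v1 v2 v3 u = (if fst u = 1 then v1 else if fst u = 2 then v2 else v3)"

text \<open>Information of the advertiser: her own private signal only, or her
  signal together with the publisher's data (T_12 versus T_3).\<close>
definition own_info :: "nat \<times> bool \<Rightarrow> bool" where
  "own_info u = snd u"

definition full_info :: "nat \<times> bool \<Rightarrow> bool \<times> bool" where
  "full_info u = (snd u, fst u = 3)"

definition cexp :: "('u \<Rightarrow> real) \<Rightarrow> ('u \<Rightarrow> real) \<Rightarrow> ('u \<Rightarrow> 's) \<Rightarrow> 'u set \<Rightarrow> 'u \<Rightarrow> real" where
  "cexp P v I U u =
     (\<Sum>x\<in>{y\<in>U. I y = I u}. P x * v x) / (\<Sum>x\<in>{y\<in>U. I y = I u}. P x)"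

text \<open>Expected utility in a second-price auction of bidding \<beta> with value w, when the
  highest competing bid has density f: E[(w - p) 1{p < \<beta>}].\<close>
definition auction_util :: "(real \<Rightarrow> real) \<Rightarrow> real \<Rightarrow> real \<Rightarrow> real" where
  "auction_util f \<beta> w = (LINT p:{..<\<beta>}|lborel. (w - p) * f p)"

definition exp_util :: "(real \<Rightarrow> real) \<Rightarrow> ('u \<Rightarrow> real) \<Rightarrow> ('u \<Rightarrow> real) \<Rightarrow> ('u \<Rightarrow> 's) \<Rightarrow> 'u set \<Rightarrow> real" where
  "exp_util f P v I U = (\<Sum>u\<in>U. P u * auction_util f (cexp P v I U u) (v u))"

definition avg_bid :: "('u \<Rightarrow> real) \<Rightarrow> ('u \<Rightarrow> real) \<Rightarrow> ('u \<Rightarrow> 's) \<Rightarrow> 'u set \<Rightarrow> 'u set \<Rightarrow> real" where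
  "avg_bid P v I U W = (\<Sum>u\<in>U \<inter> W. P u * cexp P v I U u) / (\<Sum>u\<in>U \<inter> W. P u)"

definition T12 :: "(nat \<times> bool) set" where "T12 = {u. fst u \<in> {1, 2}}"
definition T3 :: "(nat \<times> bool) set" where "T3 = {u. fst u = 3}"

definition data_value :: "(real \<Rightarrow> real) \<Rightarrow> real \<Rightarrow> real \<Rightarrow> real \<Rightarrow> real \<Rightarrow>
    real \<Rightarrow> real \<Rightarrow> real \<Rightarrow> real" where
  "data_value f p1 p2 p3 \<alpha> v1 v2 v3 =
     exp_util f (mass p1 p2 p3 \<alpha>) (val v1 v2 v3) full_info atoms
     - exp_util f (mass p1 p2 p3 \<alpha>) (val v1 v2 v3) own_info atoms"

end

theory Submission
  imports Defs
begin


lemma si_int: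
  fixes f :: "real \<Rightarrow> real"
  assumes "integrable lborel f"
  shows "set_integrable lborel {x..y} (\<lambda>p. (w - p) * f p)"
proof -
  have fm: "f \<in> borel_measurable lborel" using assms by auto
  have "integrable lborel (\<lambda>p. (\<bar>w\<bar> + \<bar>x\<bar> + \<bar>y\<bar>) * f p)" using assms by auto
  then show ?thesis unfolding set_integrable_def
  proof (rule Bochner_Integration.integrable_bound)
    show "(\<lambda>p. indicator {x..y} p *\<^sub>R ((w - p) * f p)) \<in> borel_measurable lborel"
      using fm by measurable
    show "AE p in lborel. norm (indicator {x..y} p *\<^sub>R ((w - p) * f p)) \<le> norm ((\<bar>w\<bar> + \<bar>x\<bar> + \<bar>y\<bar>) * f p)"
    proof (rule AE_I2)
      fix p
      show "norm (indicator {x..y} p *\<^sub>R ((w - p) * f p)) \<le> norm ((\<bar>w\<bar> + \<bar>x\<bar> + \<bar>y\<bar>) * f p)"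
      proof (cases "p \<in> {x..y}")
        case True
        then have "\<bar>w - p\<bar> \<le> \<bar>w\<bar> + \<bar>x\<bar> + \<bar>y\<bar>" by auto
        then show ?thesis using True by (auto simp: abs_mult intro!: mult_right_mono)
      qed auto
    qed
  qed
qed

lemma lint_henstock:
  fixes f :: "real \<Rightarrow> real"
  assumes "integrable lborel f"
  shows "(LINT p:{x..y}|lborel. (w - p) * f p) = w * integral {x..y} f - integral {x..y} (\<lambda>p. p * f p)"
    and "f integrable_on {x..y}" and "(\<lambda>p. p * f p) integrable_on {x..y}"
proof -
  have a: "set_integrable lborel {x..y} (\<lambda>p. (0 - p) * f p)" by (rule si_int[OF assms])
  have b: "set_integrable lborel {x..y} (\<lambda>p. (1 - p) * f p)" by (rule si_int[OF assms])
  have i1: "(\<lambda>p. (0 - p) * f p) integrable_on {x..y}" using set_borel_integral_eq_integral(1)[OF a] .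
  have i2: "(\<lambda>p. (1 - p) * f p) integrable_on {x..y}" using set_borel_integral_eq_integral(1)[OF b] .
  have i3: "(\<lambda>p. (1 - p) * f p - (0 - p) * f p) integrable_on {x..y}" using integrable_diff[OF i2 i1] .
  show fi: "f integrable_on {x..y}" using i3 by (simp add: algebra_simps)
  show gi: "(\<lambda>p. p * f p) integrable_on {x..y}" using integrable_neg[OF i1] by simp
  have "(LINT p:{x..y}|lborel. (w - p) * f p) = integral {x..y} (\<lambda>p. (w - p) * f p)"
    by (rule set_borel_integral_eq_integral(2)[OF si_int[OF assms]])
  also have "\<dots> = integral {x..y} (\<lambda>p. w * f p - p * f p)" by (simp add: algebra_simps)
  also have "\<dots> = w * integral {x..y} f - integral {x..y} (\<lambda>p. p * f p)"
    using fi gi by (subst integral_diff) (auto intro: integrable_on_mult_right)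
  finally show "(LINT p:{x..y}|lborel. (w - p) * f p) = w * integral {x..y} f - integral {x..y} (\<lambda>p. p * f p)" .
qed

lemma au_formula:
  fixes f :: "real \<Rightarrow> real"
  assumes "integrable lborel f" "\<forall>p. p < 0 \<longrightarrow> f p = 0" "0 \<le> \<beta>"
  shows "auction_util f \<beta> w = w * integral {0..\<beta>} f - integral {0..\<beta>} (\<lambda>p. p * f p)"
proof -
  have fm: "f \<in> borel_measurable lborel" using assms by auto
  have "(LINT p:{..<\<beta>}|lborel. (w - p) * f p) = (LINT p:{0..<\<beta>}|lborel. (w - p) * f p)"
    unfolding set_lebesgue_integral_def
    by (rule Bochner_Integration.integral_cong) (use assms(2) in \<open>auto simp: indicator_def\<close>)
  also have "\<dots> = (LINT p:{0..\<beta>}|lborel. (w - p) * f p)"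
  proof (rule set_integral_cong_set)
    show "set_borel_measurable lborel {0..\<beta>} (\<lambda>p. (w - p) * f p)"
      unfolding set_borel_measurable_def using fm by measurable
    show "set_borel_measurable lborel {0..<\<beta>} (\<lambda>p. (w - p) * f p)"
      unfolding set_borel_measurable_def using fm by measurable
    show "AE x in lborel. (x \<in> {0..\<beta>}) = (x \<in> {0..<\<beta>})"
      using AE_lborel_singleton[of \<beta>] by eventually_elim auto
  qed
  finally show ?thesis unfolding auction_util_def using lint_henstock(1)[OF assms(1)] by simp
qed



lemma sum_atoms: "(\<Sum>u\<in>atoms. g u) = g (1,True) + g (1,False) + g (2,False) + g (3,False)"
  by (simp add: atoms_def add.assoc)

lemma sets_eqs:
  "{y\<in>atoms. full_info y = full_info (1,True)} = {(1,True)}"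
  "{y\<in>atoms. full_info y = full_info (1,False)} = {(1,False),(2,False)}"
  "{y\<in>atoms. full_info y = full_info (2,False)} = {(1,False),(2,False)}"
  "{y\<in>atoms. full_info y = full_info (3,False)} = {(3,False)}"
  "{y\<in>atoms. own_info y = own_info (1,True)} = {(1,True)}"
  "{y\<in>atoms. own_info y = own_info (1,False)} = {(1,False),(2,False),(3,False)}"
  "{y\<in>atoms. own_info y = own_info (2,False)} = {(1,False),(2,False),(3,False)}"
  "{y\<in>atoms. own_info y = own_info (3,False)} = {(1,False),(2,False),(3,False)}"
  "atoms \<inter> T12 = {(1,True),(1,False),(2,False)}"
  "atoms \<inter> T3 = {(3,False)}"
  by (auto simp: atoms_def full_info_def own_info_def T12_def T3_def)

lemma sets_eqs2:
  "{y\<in>atoms. full_info y = full_info (Suc 0,True)} = {(Suc 0,True)}"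
  "{y\<in>atoms. full_info y = full_info (Suc 0,False)} = {(Suc 0,False),(2,False)}"
  "{y\<in>atoms. full_info y = full_info (2,False)} = {(Suc 0,False),(2,False)}"
  "{y\<in>atoms. full_info y = full_info (3,False)} = {(3,False)}"
  "{y\<in>atoms. own_info y = own_info (Suc 0,True)} = {(Suc 0,True)}"
  "{y\<in>atoms. own_info y = own_info (Suc 0,False)} = {(Suc 0,False),(2,False),(3,False)}"
  "{y\<in>atoms. own_info y = own_info (2,False)} = {(Suc 0,False),(2,False),(3,False)}"
  "{y\<in>atoms. own_info y = own_info (3,False)} = {(Suc 0,False),(2,False),(3,False)}"
  "atoms \<inter> T12 = {(Suc 0,True),(Suc 0,False),(2,False)}"
  "atoms \<inter> T3 = {(3,False)}"
  by (auto simp: atoms_def full_info_def own_info_def T12_def T3_def)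

lemma aux_wavg: "(a::real) + b \<noteq> 0 \<Longrightarrow> a*(X/(a+b)) + b*(X/(a+b)) = X"
proof -
  assume h: "a + b \<noteq> 0"
  have "a*(X/(a+b)) + b*(X/(a+b)) = (a+b)*(X/(a+b))" by (simp only: distrib_right)
  also have "\<dots> = X" using h by simp
  finally show ?thesis .
qed

lemma dv_formula:
  assumes "p3 > 0"
  shows "data_value f p1 p2 p3 \<alpha> v1 v2 v3 =
    (1-\<alpha>)*p1*(auction_util f (((1-\<alpha>)*p1* v1 + p2* v2)/((1-\<alpha>)*p1+p2)) v1
       - auction_util f (((1-\<alpha>)*p1* v1 + p2* v2 + p3* v3)/((1-\<alpha>)*p1+p2+p3)) v1)
  + p2*(auction_util f (((1-\<alpha>)*p1* v1 + p2* v2)/((1-\<alpha>)*p1+p2)) v2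
       - auction_util f (((1-\<alpha>)*p1* v1 + p2* v2 + p3* v3)/((1-\<alpha>)*p1+p2+p3)) v2)
  + p3*(auction_util f v3 v3
       - auction_util f (((1-\<alpha>)*p1* v1 + p2* v2 + p3* v3)/((1-\<alpha>)*p1+p2+p3)) v3)"
  using assms
  unfolding data_value_def exp_util_def sum_atoms cexp_def sets_eqs
  by (simp add: sets_eqs2 mass_def val_def algebra_simps)

lemma avg_formula:
  assumes "p3 > 0" "p2 > 0" "\<alpha> \<le> 1" "p1 > 0"
  shows "avg_bid (mass p1 p2 p3 \<alpha>) (val v1 v2 v3) full_info atoms T12 = (p1* v1+p2* v2)/(p1+p2)"
    "avg_bid (mass p1 p2 p3 \<alpha>) (val v1 v2 v3) full_info atoms T3 = v3"
proof -
  have m: "(1-\<alpha>)*p1+p2 > 0" using assms by (smt (verit) mult_nonneg_nonneg)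
  have e: "\<alpha>*p1*(\<alpha>*p1 * v1/(\<alpha>*p1)) = \<alpha>*p1 * v1" by (cases "\<alpha>*p1 = 0") auto
  have d: "(1-\<alpha>)*p1 * (((1-\<alpha>)*p1 * v1 + p2 * v2)/((1-\<alpha>)*p1+p2)) + p2 * (((1-\<alpha>)*p1 * v1 + p2 * v2)/((1-\<alpha>)*p1+p2)) = (1-\<alpha>)*p1 * v1 + p2 * v2"
    using m by (intro aux_wavg) simp
  have "avg_bid (mass p1 p2 p3 \<alpha>) (val v1 v2 v3) full_info atoms T12 =
     (\<alpha>*p1*(\<alpha>*p1 * v1/(\<alpha>*p1)) + ((1-\<alpha>)*p1 * (((1-\<alpha>)*p1 * v1 + p2 * v2)/((1-\<alpha>)*p1+p2)) + p2 * (((1-\<alpha>)*p1 * v1 + p2 * v2)/((1-\<alpha>)*p1+p2))))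
     / (\<alpha>*p1 + (1-\<alpha>)*p1 + p2)"
    unfolding avg_bid_def sets_eqs cexp_def
    by (simp add: sets_eqs2 mass_def val_def add.assoc)
  also have "\<dots> = (p1 * v1+p2 * v2)/(p1+p2)" unfolding e d by (simp add: algebra_simps)
  finally show "avg_bid (mass p1 p2 p3 \<alpha>) (val v1 v2 v3) full_info atoms T12 = (p1 * v1+p2 * v2)/(p1+p2)" .
  show "avg_bid (mass p1 p2 p3 \<alpha>) (val v1 v2 v3) full_info atoms T3 = v3"
    using assms unfolding avg_bid_def sets_eqs cexp_def
    by (simp add: sets_eqs2 mass_def val_def)
qed



lemma wavg3:
  fixes a b c x y z M :: real
  assumes "a \<ge> 0" "b \<ge> 0" "c \<ge> 0" "a + b + c > 0"
    "0 \<le> x" "x \<le> M" "0 \<le> y" "y \<le> M" "0 \<le> z" "z \<le> M"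
  shows "0 \<le> (a*x+b*y+c*z)/(a+b+c)" "(a*x+b*y+c*z)/(a+b+c) \<le> M"
proof -
  show "0 \<le> (a*x+b*y+c*z)/(a+b+c)" using assms by simp
  have "a*x+b*y+c*z \<le> a*M+b*M+c*M" using assms by (intro add_mono mult_left_mono) auto
  then show "(a*x+b*y+c*z)/(a+b+c) \<le> M" using assms by (simp add: divide_le_eq algebra_simps)
qed

lemma wavg2:
  fixes a b x y M :: real
  assumes "a \<ge> 0" "b \<ge> 0" "a + b > 0"
    "0 \<le> x" "x \<le> M" "0 \<le> y" "y \<le> M"
  shows "0 \<le> (a*x+b*y)/(a+b)" "(a*x+b*y)/(a+b) \<le> M"
proof -
  show "0 \<le> (a*x+b*y)/(a+b)" using assms by simp
  have "a*x+b*y \<le> a*M+b*M" using assms by (intro add_mono mult_left_mono) auto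
  then show "(a*x+b*y)/(a+b) \<le> M" using assms by (simp add: divide_le_eq algebra_simps)
qed

lemma lint_neg:
  fixes f :: "real \<Rightarrow> real"
  shows "(LINT p:{x..y}|lborel. (p - w) * f p) = - (LINT p:{x..y}|lborel. (w - p) * f p)"
proof -
  have "(\<lambda>p. (p - w) * f p) = (\<lambda>p. (-1) * ((w - p) * f p))" by (auto simp: fun_eq_iff algebra_simps)
  then show ?thesis by (simp only: set_integral_mult_right)
qed

theorem mainTheorem17:
  fixes p1 p2 p3 b12 b3 V :: real and f :: "real \<Rightarrow> real"
  assumes "p1 > 0" "p2 > 0" "p3 > 0" "p1 + p2 + p3 = 1"
    and "\<forall>p. f p \<ge> 0" "\<forall>p. p < 0 \<longrightarrow> f p = 0"
    and "integrable lborel f" "(\<integral>p. f p \<partial>lborel) = 1"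
    and "b12 > b3" "b3 \<ge> 0"
    and "0 \<le> V"
    and "V \<le> (let b = (p1 + p2) * b12 + p3 * b3 in
               (p1 + p2) * (LINT p:{b..b12}|lborel. (b12 - p) * f p)
               + p3 * (LINT p:{b3..b}|lborel. (p - b3) * f p))"
  shows "\<exists>v1 v2 v3 \<alpha>. 0 \<le> v1 \<and> 0 \<le> v2 \<and> 0 \<le> v3 \<and> 0 \<le> \<alpha> \<and> \<alpha> \<le> 1 \<and>
     avg_bid (mass p1 p2 p3 \<alpha>) (val v1 v2 v3) full_info atoms T12 = b12 \<and>
     avg_bid (mass p1 p2 p3 \<alpha>) (val v1 v2 v3) full_info atoms T3 = b3 \<and>
     data_value f p1 p2 p3 \<alpha> v1 v2 v3 = V"
proof -
  note fi = assms(7)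
  define Fi where "Fi x = integral {0..x} f" for x
  define Gi where "Gi x = integral {0..x} (\<lambda>p. p * f p)" for x
  define A where "A x w = w * Fi x - Gi x" for x w
  define M where "M = b12 + p2 * (b12 - b3) / p1"
  define v1t where "v1t t = b12 + p2 * t * (b12 - b3) / p1" for t
  define v2t where "v2t t = b12 + t * (b3 - b12)" for t
  define dt where "dt t = ((1-t)*p1 * v1t t + p2 * v2t t)/((1-t)*p1+p2)" for t
  define ct where "ct t = ((1-t)*p1 * v1t t + p2 * v2t t + p3 * b3)/((1-t)*p1+p2+p3)" for t
  define G where "G t = (1-t)*p1*(A (dt t) (v1t t) - A (ct t) (v1t t))
     + p2*(A (dt t) (v2t t) - A (ct t) (v2t t)) + p3*(A b3 b3 - A (ct t) b3)" for t
  have au: "auction_util f x w = A x w" if "0 \<le> x" for x w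
    using au_formula[OF fi assms(6) that] by (simp add: A_def Fi_def Gi_def)
  have M0: "b12 \<le> M" using assms by (simp add: M_def)
  have bnd: "0 \<le> v1t t \<and> v1t t \<le> M \<and> 0 \<le> v2t t \<and> v2t t \<le> M \<and> 0 \<le> dt t \<and> dt t \<le> M
     \<and> 0 \<le> ct t \<and> ct t \<le> M" if t: "0 \<le> t" "t \<le> 1" for t
  proof -
    have v1a: "0 \<le> v1t t" using assms t by (simp add: v1t_def)
    have h0: "p2*t*(b12-b3) \<le> p2*1*(b12-b3)"
      using assms t by (intro mult_right_mono mult_left_mono) auto
    have v1b: "v1t t \<le> M" unfolding v1t_def M_def
      using divide_right_mono[OF h0, of p1] assms(1) by simp
    have h1: "t*(b12-b3) \<le> b12-b3" using assms t mult_right_mono[of t 1 "b12-b3"] by simp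
    have e2: "v2t t = b12 - t*(b12-b3)" unfolding v2t_def by (simp add: algebra_simps)
    have v2a: "0 \<le> v2t t" unfolding e2 using h1 assms by linarith
    have h2: "0 \<le> t*(b12-b3)" using assms t by simp
    have v2b: "v2t t \<le> M" unfolding e2 using h2 M0 by linarith
    have m1: "(1-t)*p1 \<ge> 0" using t assms by simp
    show ?thesis using v1a v1b v2a v2b m1 assms M0 unfolding dt_def ct_def
      by (intro conjI wavg2 wavg3) auto
  qed
  have dv: "data_value f p1 p2 p3 t (v1t t) (v2t t) b3 = G t" if t: "0 \<le> t" "t \<le> 1" for t
    using bnd[OF t] assms(3,10)
    unfolding dv_formula[OF assms(3)] G_def dt_def[symmetric] ct_def[symmetric]
    by (simp add: au)
  have intf: "f integrable_on {0..M}" using lint_henstock(2)[OF fi] .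
  have intg: "(\<lambda>p. p * f p) integrable_on {0..M}" using lint_henstock(3)[OF fi] .
  have cF: "continuous_on {0..M} Fi" unfolding Fi_def using indefinite_integral_continuous_1[OF intf] .
  have cG: "continuous_on {0..M} Gi" unfolding Gi_def using indefinite_integral_continuous_1[OF intg] .
  have den1: "(1-t)*p1+p2 \<noteq> 0" "(1-t)*p1+p2+p3 \<noteq> 0" if "t \<in> {0..1}" for t
    using that assms by (smt (verit) mult_nonneg_nonneg atLeastAtMost_iff)+
  have cdt: "continuous_on {0..1} dt" unfolding dt_def v1t_def v2t_def
    using den1 assms(1) by (intro continuous_intros) auto
  have cct: "continuous_on {0..1} ct" unfolding ct_def v1t_def v2t_def
    using den1 assms(1) by (intro continuous_intros) auto
  have imd: "dt ` {0..1} \<subseteq> {0..M}" "ct ` {0..1} \<subseteq> {0..M}" using bnd by auto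
  have c1: "continuous_on {0..1} (\<lambda>t. Fi (dt t))" by (rule continuous_on_compose2[OF cF cdt imd(1)])
  have c2: "continuous_on {0..1} (\<lambda>t. Gi (dt t))" by (rule continuous_on_compose2[OF cG cdt imd(1)])
  have c3: "continuous_on {0..1} (\<lambda>t. Fi (ct t))" by (rule continuous_on_compose2[OF cF cct imd(2)])
  have c4: "continuous_on {0..1} (\<lambda>t. Gi (ct t))" by (rule continuous_on_compose2[OF cG cct imd(2)])
  have cv1: "continuous_on {0..1} v1t" unfolding v1t_def using assms(1) by (intro continuous_intros) auto
  have cv2: "continuous_on {0..1} v2t" unfolding v2t_def by (intro continuous_intros)
  have cGt: "continuous_on {0..1} G" unfolding G_def A_def
    by (intro continuous_on_diff continuous_on_add continuous_on_mult continuous_on_const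
        continuous_on_id cv1 cv2 c1 c2 c3 c4)
  have G1: "G 1 = 0"
  proof -
    have "dt 1 = b3" "ct 1 = b3" using assms unfolding dt_def ct_def v2t_def
      by (simp_all add: distrib_right[symmetric])
    then show ?thesis unfolding G_def by simp
  qed
  define b where "b = (p1 + p2) * b12 + p3 * b3"
  have bb: "b3 \<le> b" "b \<le> b12"
  proof -
    have "b3 = (p1+p2)*b3 + p3*b3" using assms(4) by (metis distrib_right mult_1)
    then show "b3 \<le> b" unfolding b_def using assms by (smt (verit) mult_left_mono)
    have "b12 = (p1+p2)*b12 + p3*b12" using assms(4) by (metis distrib_right mult_1)
    then show "b \<le> b12" unfolding b_def using assms by (smt (verit) mult_left_mono)
  qed
  have dt0: "dt 0 = b12" using assms unfolding dt_def v1t_def v2t_def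
    by (simp add: distrib_right[symmetric])
  have ct0: "ct 0 = b" using assms unfolding ct_def v1t_def v2t_def b_def
    by (simp add: distrib_right[symmetric])
  have comb: "integral {0..y} h = integral {0..x} h + integral {x..y} h"
    if "0 \<le> x" "x \<le> y" "h integrable_on {0..y}" for x y and h :: "real \<Rightarrow> real"
    using Henstock_Kurzweil_Integration.integral_combine[OF that(1,2,3)] by simp
  have Vm: "(let b = (p1 + p2) * b12 + p3 * b3 in
               (p1 + p2) * (LINT p:{b..b12}|lborel. (b12 - p) * f p)
               + p3 * (LINT p:{b3..b}|lborel. (p - b3) * f p)) = G 0"
  proof -
    have b0: "0 \<le> b" using bb assms by simp
    have I1: "(LINT p:{b..b12}|lborel. (b12 - p) * f p) = A b12 b12 - A b b12"
      unfolding lint_henstock(1)[OF fi] A_def Fi_def Gi_def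
      using comb[OF b0 bb(2) lint_henstock(2)[OF fi]] comb[OF b0 bb(2) lint_henstock(3)[OF fi]]
      by (simp add: algebra_simps)
    have I2: "(LINT p:{b3..b}|lborel. (p - b3) * f p) = A b3 b3 - A b b3"
      unfolding lint_neg lint_henstock(1)[OF fi] A_def Fi_def Gi_def
      using comb[OF assms(10) bb(1) lint_henstock(2)[OF fi]] comb[OF assms(10) bb(1) lint_henstock(3)[OF fi]]
      by (simp add: algebra_simps)
    have "v1t 0 = b12" "v2t 0 = b12" by (simp_all add: v1t_def v2t_def)
    then have "G 0 = p1*(A b12 b12 - A b b12) + p2*(A b12 b12 - A b b12) + p3*(A b3 b3 - A b b3)"
      unfolding G_def dt0 ct0 by simp
    then show ?thesis unfolding Let_def b_def[symmetric] I1 I2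
      by (simp add: algebra_simps)
  qed
  obtain t where t: "0 \<le> t" "t \<le> 1" "G t = V"
    using IVT2'[of G 1 V 0, OF _ _ _ cGt] assms(11,12) G1 Vm by auto
  show ?thesis
  proof (intro exI conjI)
    show "0 \<le> v1t t" "0 \<le> v2t t" using bnd[OF t(1,2)] by auto
    show "0 \<le> b3" "0 \<le> t" "t \<le> 1" using assms t by auto
    have "p1 * v1t t + p2 * v2t t = (p1 + p2) * b12" using assms(1) unfolding v1t_def v2t_def
      by (simp add: field_simps)
    then show "avg_bid (mass p1 p2 p3 t) (val (v1t t) (v2t t) b3) full_info atoms T12 = b12"
      using avg_formula(1)[OF assms(3,2) t(2) assms(1)] assms by simp
    show "avg_bid (mass p1 p2 p3 t) (val (v1t t) (v2t t) b3) full_info atoms T3 = b3"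
      using avg_formula(2)[OF assms(3,2) t(2) assms(1)] .
    show "data_value f p1 p2 p3 t (v1t t) (v2t t) b3 = V" using dv[OF t(1,2)] t(3) by simp
  qed
qed

end
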